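(* Let $\mathbb{F}=\mathbb{F}_q$ with $q<n$, $\Delta>1$, $D\le\frac{n(q-1)-q}{2}$, and additionally $D=o(n)$. Then for sufficiently large $n$ there exist matrices $M$ over $\mathbb{F}_q$ that can $\Delta$-approximate $d=\|\mathbf{x}\|_0$ from $M\mathbf{x}$ for every $\mathbf{x}\in\mathbb{F}_q^n$ of weight at most $D$, with $(2D+1)\log_q\!\left(\frac{n}{2D+1}\right)+O(D)=O(D\log(n/D))$ rows.
   Context: $M\mathbf{x}$ is the ordinary matrix-vector product over $\mathbb{F}_q$; $\|\mathbf{x}\|_0$ is the number of nonzero entries. $M$ can $\Delta$-approximate $d$ if a deterministic decoder given only $M\mathbf{x}$ outputs $\hat d$ with $\frac1\Delta\le\hat d/d\le\Delta$ for all $\mathbf{x}$ with $\|\mathbf{x}\|_0\le D$. *)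

theory Defs
  imports "HOL-Analysis.Analysis" "HOL-Library.Landau_Symbols"
begin

text \<open>An m x n matrix over a field is represented as M :: nat => nat => 'a (entries
  M i j with i < m, j < n are relevant); vectors in F^n as nat => 'a supported on {..<n}.\<close>

definition mat_vec :: "nat \<Rightarrow> nat \<Rightarrow> (nat \<Rightarrow> nat \<Rightarrow> 'a::field) \<Rightarrow> (nat \<Rightarrow> 'a) \<Rightarrow> (nat \<Rightarrow> 'a)" where
  "mat_vec m n M x = (\<lambda>i. if i < m then (\<Sum>j<n. M i j * x j) else 0)"

definition weight0 :: "nat \<Rightarrow> (nat \<Rightarrow> 'a::zero) \<Rightarrow> nat" where
  "weight0 n x = card {j \<in> {..<n}. x j \<noteq> 0}"

text \<open>M (m rows, n columns) can Delta-approximate the Hamming weight d of every x in F^n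
  with weight at most D: a deterministic decoder given only Mx outputs dhat with
  d/Delta <= dhat <= Delta*d (equivalent to 1/Delta <= dhat/d <= Delta for d > 0,
  and forcing dhat = 0 when d = 0).\<close>

definition can_approx :: "real \<Rightarrow> nat \<Rightarrow> nat \<Rightarrow> nat \<Rightarrow> (nat \<Rightarrow> nat \<Rightarrow> 'a::field) \<Rightarrow> bool" where
  "can_approx \<Delta> D m n M \<longleftrightarrow>
     (\<exists>dec :: (nat \<Rightarrow> 'a) \<Rightarrow> real.
        \<forall>x :: nat \<Rightarrow> 'a. (\<forall>j\<ge>n. x j = 0) \<longrightarrow> weight0 n x \<le> D \<longrightarrow>
          real (weight0 n x) / \<Delta> \<le> dec (mat_vec m n M x) \<and>
          dec (mat_vec m n M x) \<le> \<Delta> * real (weight0 n x))"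

end

theory Submission
  imports Defs
begin

lemma mat_vec_diff:
  "mat_vec m n M (\<lambda>j. x j - y j) = (\<lambda>i. mat_vec m n M x i - mat_vec m n M y i)"
  by (auto simp: mat_vec_def fun_eq_iff right_diff_distrib sum_subtractf)

lemma weight_diff:
  "weight0 n (\<lambda>j. x j - y j) \<le> weight0 n x + weight0 n (y :: nat \<Rightarrow> 'a::ab_group_add)"
proof -
  have "{j \<in> {..<n}. x j - y j \<noteq> 0} \<subseteq> {j \<in> {..<n}. x j \<noteq> 0} \<union> {j \<in> {..<n}. y j \<noteq> 0}"
    by auto
  then have "card {j \<in> {..<n}. x j - y j \<noteq> 0} \<le> card ({j \<in> {..<n}. x j \<noteq> 0} \<union> {j \<in> {..<n}. y j \<noteq> 0})"
    by (intro card_mono) auto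
  also have "\<dots> \<le> card {j \<in> {..<n}. x j \<noteq> 0} + card {j \<in> {..<n}. y j \<noteq> 0}"
    by (rule card_Un_le)
  finally show ?thesis by (simp add: weight0_def)
qed

lemma decoder:
  fixes M :: "nat \<Rightarrow> nat \<Rightarrow> 'a::field"
  assumes "1 \<le> \<Delta>"
    and inj: "\<forall>v. (\<forall>j\<ge>n. v j = 0) \<longrightarrow> v \<noteq> (\<lambda>_. 0) \<longrightarrow> weight0 n v \<le> 2*D \<longrightarrow> mat_vec m n M v \<noteq> (\<lambda>_. 0)"
  shows "can_approx \<Delta> D m n M"
proof -
  define P where "P y x \<longleftrightarrow> (\<forall>j\<ge>n. x j = 0) \<and> weight0 n x \<le> D \<and> mat_vec m n M x = y" for y x
  define dec where "dec y = real (weight0 n (SOME x. P y x))" for y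
  have key: "dec (mat_vec m n M x) = real (weight0 n x)"
    if x: "\<forall>j\<ge>n. x j = 0" "weight0 n x \<le> D" for x
  proof -
    have "P (mat_vec m n M x) x" using x by (simp add: P_def)
    then have px: "P (mat_vec m n M x) (SOME x'. P (mat_vec m n M x) x')" by (metis someI_ex)
    define x' where "x' = (SOME x'. P (mat_vec m n M x) x')"
    define v where "v = (\<lambda>j. x' j - x j)"
    have "\<forall>j\<ge>n. v j = 0" using px x by (simp add: P_def v_def x'_def)
    moreover have "weight0 n v \<le> 2*D"
      using weight_diff[of n x' x] px x unfolding v_def x'_def P_def by linarith
    moreover have "mat_vec m n M v = (\<lambda>_. 0)"
      using px unfolding v_def mat_vec_diff x'_def P_def by (simp add: fun_eq_iff)
    ultimately have "v = (\<lambda>_. 0)" using inj by blast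
    then have "x' = x" by (simp add: v_def fun_eq_iff)
    then show ?thesis by (simp add: dec_def x'_def)
  qed
  show ?thesis unfolding can_approx_def
  proof (intro exI allI impI)
    fix x :: "nat \<Rightarrow> 'a" assume a: "\<forall>j\<ge>n. x j = 0" "weight0 n x \<le> D"
    have d: "0 \<le> real (weight0 n x)" by simp
    show "real (weight0 n x) / \<Delta> \<le> dec (mat_vec m n M x) \<and> dec (mat_vec m n M x) \<le> \<Delta> * real (weight0 n x)"
      unfolding key[OF a] using assms(1) d
      by (auto simp: divide_le_eq intro: mult_left_mono[of 1 \<Delta>, simplified] mult_right_mono[of 1 \<Delta>, simplified])
  qed
qed


lemma card_mats:
  assumes "finite A"
  shows "card {M :: nat \<Rightarrow> nat \<Rightarrow> 'a::{finite,zero}. \<forall>i j. (i,j) \<notin> A \<longrightarrow> M i j = 0} = CARD('a) ^ card A"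
proof -
  define F where "F = {f :: nat \<times> nat \<Rightarrow> 'a. \<forall>p. p \<notin> A \<longrightarrow> f p = 0}"
  have eq: "{M :: nat \<Rightarrow> nat \<Rightarrow> 'a. \<forall>i j. (i,j) \<notin> A \<longrightarrow> M i j = 0} = curry ` F"
  proof (intro equalityI subsetI)
    fix M :: "nat \<Rightarrow> nat \<Rightarrow> 'a" assume "M \<in> {M. \<forall>i j. (i,j) \<notin> A \<longrightarrow> M i j = 0}"
    then have "case_prod M \<in> F" by (auto simp: F_def)
    then show "M \<in> curry ` F" by (metis curry_case_prod image_eqI)
  qed (auto simp: F_def)
  have "inj_on curry F" by (metis curry_def inj_onI case_prod_curry)
  then have c1: "card (curry ` F) = card F" by (rule card_image)
  have img: "(\<lambda>f. restrict f A) ` F = PiE A (\<lambda>_. UNIV)"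
  proof (intro equalityI subsetI)
    fix g :: "nat \<times> nat \<Rightarrow> 'a" assume g: "g \<in> PiE A (\<lambda>_. UNIV)"
    define f where "f = (\<lambda>p. if p \<in> A then g p else 0)"
    have "f \<in> F" by (simp add: f_def F_def)
    moreover have "restrict f A = g" using g by (auto simp: f_def restrict_def fun_eq_iff PiE_def extensional_def)
    ultimately show "g \<in> (\<lambda>f. restrict f A) ` F" by blast
  qed auto
  have "inj_on (\<lambda>f. restrict f A) F"
    by (rule inj_onI) (auto simp: F_def fun_eq_iff restrict_def split: if_splits, metis)
  then have "card ((\<lambda>f. restrict f A) ` F) = card F" by (rule card_image)
  moreover have "card (PiE A (\<lambda>_. (UNIV :: 'a set))) = CARD('a) ^ card A"
    using assms by (simp add: card_PiE)
  ultimately show ?thesis using eq c1 img by simp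
qed

lemma exists_M:
  fixes k m n :: nat
  assumes card: "card {v::nat\<Rightarrow>'a::{finite,field}. (\<forall>j\<ge>n. v j = 0) \<and> weight0 n v \<le> k} \<le> CARD('a)^m"
    and n: "n \<ge> 1"
  shows "\<exists>M::nat\<Rightarrow>nat\<Rightarrow>'a. \<forall>v. (\<forall>j\<ge>n. v j = 0) \<longrightarrow> v \<noteq> (\<lambda>_. 0) \<longrightarrow> weight0 n v \<le> k \<longrightarrow> mat_vec m n M v \<noteq> (\<lambda>_. 0)"
proof -
  define Q where "Q = CARD('a)"
  have Qpos: "Q > 0" by (simp add: Q_def)
  define S' where "S' = {v::nat\<Rightarrow>'a. (\<forall>j\<ge>n. v j = 0) \<and> weight0 n v \<le> k}"
  define S where "S = S' - {(\<lambda>_. 0)}"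
  have "S' \<subseteq> {f. \<forall>x. (x \<in> {..<n} \<longrightarrow> f x \<in> UNIV) \<and> (x \<notin> {..<n} \<longrightarrow> f x = 0)}"
    by (auto simp: S'_def)
  then have finS': "finite S'"
    by (rule finite_subset) (rule finite_set_of_finite_funs, auto)
  have "(\<lambda>_. 0) \<in> S'" by (simp add: S'_def weight0_def)
  then have "card S < card S'" unfolding S_def using finS' by (metis card_Diff1_less)
  then have cS: "card S < Q ^ m" using card by (simp add: S'_def Q_def)
  have finS: "finite S" using finS' by (simp add: S_def)
  define Mats where "Mats A = {M :: nat \<Rightarrow> nat \<Rightarrow> 'a. \<forall>i j. (i,j) \<notin> A \<longrightarrow> M i j = 0}" for A
  define R where "R = {..<m} \<times> {..<n}"
  define Bad where "Bad v = {M \<in> Mats R. mat_vec m n M v = (\<lambda>_. 0)}" for v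
  have cardMR: "card (Mats R) = Q ^ (m*n)"
    unfolding Mats_def Q_def R_def by (subst card_mats) (auto simp: card_cartesian_product)
  have finMR: "finite (Mats R)"
    using cardMR Qpos by (metis card.infinite less_not_refl2 zero_less_power)
  have bad: "card (Bad v) \<le> Q ^ (m*(n-1))" if v: "v \<in> S" for v
  proof -
    from v obtain j0 where j0: "j0 < n" "v j0 \<noteq> 0"
      by (auto simp: S_def S'_def fun_eq_iff) (metis not_le)
    define R0 where "R0 = {..<m} \<times> ({..<n} - {j0})"
    define z where "z M = (\<lambda>i j. if j = j0 then 0 else M i j)" for M :: "nat \<Rightarrow> nat \<Rightarrow> 'a"
    have "z ` Bad v \<subseteq> Mats R0"
      by (auto simp: z_def Bad_def Mats_def R_def R0_def)
    moreover have "inj_on z (Bad v)"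
    proof (rule inj_onI)
      fix M M' assume M: "M \<in> Bad v" and M': "M' \<in> Bad v" and zz: "z M = z M'"
      show "M = M'"
      proof (intro ext)
        fix i j
        show "M i j = M' i j"
        proof (cases "j = j0")
          case False then show ?thesis using zz by (auto simp: z_def fun_eq_iff) (metis)
        next
          case True
          show ?thesis
          proof (cases "i < m")
            case False then show ?thesis using M M' by (auto simp: Bad_def Mats_def R_def)
          next
            case im: True
            have oth: "\<And>j. j \<noteq> j0 \<Longrightarrow> M i j = M' i j" using zz by (auto simp: z_def fun_eq_iff) (metis)
            have e: "(\<Sum>j<n. N i j * v j) = N i j0 * v j0 + (\<Sum>j\<in>{..<n}-{j0}. N i j * v j)" for N :: "nat \<Rightarrow> nat \<Rightarrow> 'a"
              using j0 by (simp add: sum.remove)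
            have "(\<Sum>j<n. M i j * v j) = 0" "(\<Sum>j<n. M' i j * v j) = 0"
              using M M' im by (auto simp: Bad_def mat_vec_def fun_eq_iff dest!: spec[of _ i])
            moreover have "(\<Sum>j\<in>{..<n}-{j0}. M i j * v j) = (\<Sum>j\<in>{..<n}-{j0}. M' i j * v j)"
              by (rule sum.cong) (auto simp: oth)
            ultimately have "M i j0 * v j0 = M' i j0 * v j0" using e[of M] e[of M'] by (metis add_right_cancel)
            then show ?thesis using j0 True by simp
          qed
        qed
      qed
    qed
    moreover have "card (Mats R0) = Q ^ (m*(n-1))"
      unfolding Mats_def Q_def R0_def using j0 by (subst card_mats) (auto simp: card_cartesian_product)
    moreover have "finite (Mats R0)"
      using calculation(3) Qpos by (metis card.infinite less_not_refl2 zero_less_power)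
    ultimately show ?thesis by (metis card_inj_on_le)
  qed
  define U where "U = (\<Union>v\<in>S. Bad v)"
  have "card U \<le> (\<Sum>v\<in>S. card (Bad v))" unfolding U_def using finS by (rule card_UN_le)
  also have "\<dots> \<le> card S * Q ^ (m*(n-1))" using sum_bounded_above[of S "\<lambda>v. card (Bad v)"] bad by simp
  also have "\<dots> < Q ^ m * Q ^ (m*(n-1))" using cS Qpos by simp
  also have "\<dots> = Q ^ (m*n)"
  proof -
    have "m + m*(n-1) = m*n" using n by (cases n) auto
    then show ?thesis by (metis power_add)
  qed
  finally have "card U < card (Mats R)" using cardMR by simp
  moreover have "U \<subseteq> Mats R" by (auto simp: U_def Bad_def)
  ultimately have "\<not> Mats R \<subseteq> U" by (metis subset_antisym less_irrefl)
  then obtain M where M: "M \<in> Mats R" "M \<notin> U" by blast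
  show ?thesis
  proof (intro exI allI impI)
    fix v :: "nat \<Rightarrow> 'a" assume "\<forall>j\<ge>n. v j = 0" "v \<noteq> (\<lambda>_. 0)" "weight0 n v \<le> k"
    then have "v \<in> S" by (simp add: S_def S'_def)
    then show "mat_vec m n M v \<noteq> (\<lambda>_. 0)" using M by (auto simp: U_def Bad_def)
  qed
qed


lemma count_vecs:
  assumes kn: "k \<le> n"
  shows "card {v::nat\<Rightarrow>'a::{finite,zero}. (\<forall>j\<ge>n. v j = 0) \<and> weight0 n v \<le> k} \<le> (n choose k) * CARD('a)^k"
proof -
  define Ks where "Ks = {K. K \<subseteq> {..<n} \<and> card K = k}"
  define Dom where "Dom = Sigma Ks (\<lambda>K. PiE K (\<lambda>_. (UNIV :: 'a set)))"
  define g where "g p = (\<lambda>j. if j \<in> fst p then snd p j else 0)" for p :: "nat set \<times> (nat \<Rightarrow> 'a)"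
  have finKs: "finite Ks" unfolding Ks_def by (rule finite_subset[of _ "Pow {..<n}"]) auto
  have finK: "\<And>K. K \<in> Ks \<Longrightarrow> finite K" unfolding Ks_def using finite_subset[OF _ finite_lessThan] by auto
  have "card Dom = (\<Sum>K\<in>Ks. card (PiE K (\<lambda>_. (UNIV :: 'a set))))"
    unfolding Dom_def using finKs finK by (subst card_SigmaI) (auto intro: finite_PiE)
  also have "\<dots> = (\<Sum>K\<in>Ks. CARD('a) ^ k)"
  proof (rule sum.cong[OF refl])
    fix K assume K: "K \<in> Ks"
    have "finite K" by (rule finK[OF K])
    moreover have "card K = k" using K by (simp add: Ks_def)
    ultimately show "card (PiE K (\<lambda>_. (UNIV :: 'a set))) = CARD('a) ^ k"
      by (simp add: card_PiE)
  qed
  also have "\<dots> = (n choose k) * CARD('a)^k"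
    by (simp add: Ks_def n_subsets)
  finally have cD: "card Dom = (n choose k) * CARD('a)^k" .
  have finD: "finite Dom" unfolding Dom_def by (intro finite_SigmaI finKs finite_PiE finK) auto
  have sub: "{v::nat\<Rightarrow>'a. (\<forall>j\<ge>n. v j = 0) \<and> weight0 n v \<le> k} \<subseteq> g ` Dom"
  proof
    fix v :: "nat \<Rightarrow> 'a" assume "v \<in> {v. (\<forall>j\<ge>n. v j = 0) \<and> weight0 n v \<le> k}"
    then have v: "\<forall>j\<ge>n. v j = 0" "weight0 n v \<le> k" by auto
    define P where "P = {j \<in> {..<n}. v j \<noteq> 0}"
    have cP: "card P \<le> k" using v by (simp add: P_def weight0_def)
    have fP: "finite P" by (simp add: P_def)
    have "P \<subseteq> {..<n}" by (auto simp: P_def)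
    then have "card ({..<n} - P) = n - card P" using fP by (simp add: card_Diff_subset)
    then have "k - card P \<le> card ({..<n} - P)" using kn by simp
    then obtain T where T: "T \<subseteq> {..<n} - P" "card T = k - card P" and fT: "finite T"
      by (rule obtain_subset_with_card_n)
    define K where "K = P \<union> T"
    have "card K = card P + card T" unfolding K_def using T fP fT by (subst card_Un_disjoint) auto
    then have cK: "card K = k" using T cP by simp
    have KS: "K \<subseteq> {..<n}" using T by (auto simp: K_def P_def)
    have "(K, restrict v K) \<in> Dom" using KS cK by (auto simp: Dom_def Ks_def)
    moreover have "g (K, restrict v K) = v"
    proof
      fix j show "g (K, restrict v K) j = v j"
      proof (cases "j \<in> K")
        case False
        then have "j \<notin> P" by (simp add: K_def)
        then have "v j = 0" using v(1) unfolding P_def by (cases "j < n") auto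
        then show ?thesis using False by (simp add: g_def)
      qed (simp add: g_def)
    qed
    ultimately show "v \<in> g ` Dom" by (metis image_eqI)
  qed
  have "card {v::nat\<Rightarrow>'a. (\<forall>j\<ge>n. v j = 0) \<and> weight0 n v \<le> k} \<le> card (g ` Dom)"
    by (rule card_mono[OF finite_imageI[OF finD] sub])
  also have "\<dots> \<le> card Dom" using finD by (rule card_image_le)
  finally show ?thesis using cD by simp
qed

lemma pow_fact_exp:
  fixes x :: real assumes "0 \<le> x" shows "x ^ k / fact k \<le> exp x"
proof -
  have s: "summable (\<lambda>n. x^n / fact n)"
    using exp_converges[of x] by (simp add: sums_iff divide_inverse mult.commute scaleR_conv_of_real)
  have "exp x = (\<Sum>n. x^n / fact n)"
    using exp_converges[of x] by (simp add: sums_iff divide_inverse mult.commute scaleR_conv_of_real)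
  moreover have "(\<Sum>n\<in>{k}. x^n / fact n) \<le> (\<Sum>n. x^n / fact n)"
    by (rule sum_le_suminf[OF s]) (auto simp: assms)
  ultimately show ?thesis by simp
qed

lemma binom_bound:
  fixes n k :: nat and q :: real
  assumes "1 \<le> k" "k \<le> n" "0 \<le> q"
  shows "real (n choose k) * q ^ k \<le> (exp 1 * q * real n / real k) ^ k"
proof -
  have "fact k * (n choose k) = fact n div fact (n - k)"
    using binomial_fact_lemma[OF assms(2)] by (metis fact_nonzero nonzero_mult_div_cancel_right mult.assoc mult.commute)
  then have "fact k * (n choose k) \<le> n ^ k" using fact_div_fact_le_pow[OF assms(2)] by simp
  then have a: "(fact k :: real) * real (n choose k) \<le> real n ^ k"
    by (metis of_nat_fact of_nat_le_iff of_nat_mult of_nat_power)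
  have b: "real k ^ k \<le> exp (real k) * fact k"
    using pow_fact_exp[of "real k" k] by (simp add: divide_le_eq)
  have kpos: "0 < real k" using assms by simp
  have fpos: "(0::real) < fact k" by simp
  have "real (n choose k) \<le> real n ^ k / fact k" using a fpos by (simp add: le_divide_eq mult.commute)
  also have "\<dots> = (real n ^ k * exp (real k)) / (exp (real k) * fact k)"
    by simp
  also have "\<dots> \<le> real n ^ k * exp (real k) / real k ^ k"
    by (rule divide_left_mono[OF b]) (use kpos in auto)
  also have "\<dots> = (exp 1 * real n / real k) ^ k"
    by (simp add: power_divide power_mult_distrib exp_of_nat_mult[symmetric] mult.commute)
  finally have "real (n choose k) * q ^ k \<le> (exp 1 * real n / real k) ^ k * q ^ k"
    using assms(3) by (simp add: mult_right_mono)
  also have "\<dots> = (exp 1 * q * real n / real k) ^ k"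
    by (simp add: power_mult_distrib[symmetric] mult.commute mult.left_commute)
  finally show ?thesis .
qed


lemma card_ge2: "CARD('a::{finite,field}) \<ge> 2"
proof -
  have "card {0::'a, 1} = 2" by simp
  moreover have "card {0::'a, 1} \<le> CARD('a)" by (rule card_mono) auto
  ultimately show ?thesis by simp
qed

lemma weight0_zero:
  assumes "\<forall>j\<ge>n. v j = 0" "weight0 n v = 0"
  shows "v = (\<lambda>_. 0)"
proof
  fix j
  have "{j \<in> {..<n}. v j \<noteq> 0} = {}" using assms(2) by (simp add: weight0_def)
  then show "v j = 0" using assms(1) by (cases "j < n") auto
qed

lemma step:
  fixes n d :: nat and \<Delta> :: real
  assumes D1: "\<Delta> > 1" and dn: "4 * d \<le> n" and n4: "4 \<le> n"
  shows "\<exists>m (M :: nat \<Rightarrow> nat \<Rightarrow> 'a::{finite,field}). can_approx \<Delta> d m n M \<and>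
     real m \<le> real (2 * d + 1) * log (real CARD('a)) (real n / real (2 * d + 1))
       + (3 + 2 * log (real CARD('a)) (exp 1 * real CARD('a))) * real d"
proof -
  define q where "q = real CARD('a)"
  have q2: "q \<ge> 2" using card_ge2[where 'a='a] by (simp add: q_def)
  define a where "a = log q (exp 1 * q)"
  have a0: "a \<ge> 0" unfolding a_def using q2 by (subst zero_le_log_cancel_iff) (auto intro: order_trans[of _ q] simp: )
  show ?thesis
  proof (cases "d = 0")
    case True
    have "can_approx \<Delta> d 0 n (\<lambda>_ _. 0 :: 'a)"
      by (rule decoder) (use D1 True weight0_zero in auto)
    moreover have "0 \<le> log q (real n)" using q2 n4 by simp
    ultimately show ?thesis using True by (auto simp: q_def)
  next
    case False
    then have d1: "d \<ge> 1" by simp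
    define k where "k = 2 * d"
    have k1: "1 \<le> k" "k + 1 \<le> n" using d1 dn by (auto simp: k_def)
    define B where "B = (exp 1 * q * real n / real k) ^ k"
    define m where "m = nat \<lceil>log q B\<rceil>"
    have base: "1 \<le> exp 1 * q * real n / real k"
    proof -
      have "real k \<le> real n" using k1 by simp
      also have "\<dots> \<le> exp 1 * q * real n"
      proof -
        have "1 * 1 \<le> exp 1 * q" using q2 by (intro mult_mono) auto
        then have "1 \<le> exp 1 * q" by simp
        then show ?thesis using mult_right_mono[of 1 "exp 1 * q" "real n"] by simp
      qed
      finally show ?thesis using k1 by simp
    qed
    then have B1: "1 \<le> B" unfolding B_def by (rule one_le_power)
    define S' where "S' = {v::nat\<Rightarrow>'a. (\<forall>j\<ge>n. v j = 0) \<and> weight0 n v \<le> k}"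
    have "card S' \<le> (n choose k) * CARD('a)^k" unfolding S'_def using k1 by (intro count_vecs) simp
    then have "real (card S') \<le> real (n choose k) * q ^ k"
      by (metis of_nat_le_iff of_nat_mult of_nat_power q_def)
    also have "\<dots> \<le> B" unfolding B_def using k1 q2 by (intro binom_bound) auto
    also have "B \<le> q ^ m"
    proof -
      have "B = q powr (log q B)" using B1 q2 by simp
      also have "\<dots> \<le> q powr (real m)" unfolding m_def using q2 real_nat_ceiling_ge by (intro powr_mono) auto
      also have "\<dots> = q ^ m" using q2 by (simp add: powr_realpow)
      finally show ?thesis .
    qed
    finally have "card S' \<le> CARD('a) ^ m" by (simp add: q_def flip: of_nat_power)
    then obtain M :: "nat \<Rightarrow> nat \<Rightarrow> 'a" where M:
      "\<forall>v. (\<forall>j\<ge>n. v j = 0) \<longrightarrow> v \<noteq> (\<lambda>_. 0) \<longrightarrow> weight0 n v \<le> k \<longrightarrow> mat_vec m n M v \<noteq> (\<lambda>_. 0)"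
      using exists_M[of n k m] k1 unfolding S'_def by auto
    have ca: "can_approx \<Delta> d m n M" by (rule decoder) (use D1 M k_def in auto)
    define L where "L = log q (real n / real (k+1))"
    have L0: "0 \<le> L" unfolding L_def using q2 k1 by simp
    have lB: "log q B = real k * (a + log q (real n / real k))"
    proof -
      have "log q B = real k * log q (exp 1 * q * real n / real k)"
        unfolding B_def using base by (simp add: log_nat_power)
      also have "exp 1 * q * real n / real k = (exp 1 * q) * (real n / real k)" by simp
      also have "log q \<dots> = a + log q (real n / real k)"
        unfolding a_def using q2 k1 by (subst log_mult) auto
      finally show ?thesis .
    qed
    have lnk: "log q (real n / real k) \<le> L + 1"
    proof -
      have eqn: "real n / real k = (real n / real (k+1)) * (real (k+1) / real k)" using k1 by simp
      have "log q (real n / real k) = L + log q (real (k+1) / real k)"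
        unfolding L_def by (subst eqn, subst log_mult) (use k1 in auto)
      moreover have "log q (real (k+1) / real k) \<le> log q q"
      proof -
        have "real (k+1) / real k \<le> 2" using k1 by (simp add: divide_le_eq)
        then have "real (k+1) / real k \<le> q" using q2 by simp
        then show ?thesis using q2 k1 by (subst log_le_cancel_iff) auto
      qed
      ultimately show ?thesis using q2 by simp
    qed
    have lnk0: "0 \<le> log q (real n / real k)" using q2 k1 by simp
    have lB0: "0 \<le> log q B" using lB a0 lnk0 by simp
    have "real m \<le> log q B + 1" unfolding m_def using lB0 by linarith
    also have "\<dots> \<le> real k * (a + L + 1) + 1" unfolding lB using lnk k1 by (simp add: mult_left_mono)
    also have "\<dots> \<le> real (k+1) * L + (3 + 2 * a) * real d"
    proof -
      have "real k * L \<le> real (k+1) * L" using L0 by (simp add: mult_right_mono)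
      then show ?thesis using d1 a0 by (simp add: k_def algebra_simps)
    qed
    finally show ?thesis using ca unfolding L_def a_def q_def k_def by auto
  qed
qed

theorem corollary2:
  fixes D :: "nat \<Rightarrow> nat" and \<Delta> :: real
  assumes "\<Delta> > 1"
    and "\<forall>n. CARD('a::{finite,field}) < n \<longrightarrow>
           2 * real (D n) \<le> real n * (real CARD('a) - 1) - real CARD('a)"
    and "(\<lambda>n. real (D n)) \<in> o(\<lambda>n. real n)"
  shows "\<exists>C. \<forall>\<^sub>F n in sequentially. \<exists>m (M :: nat \<Rightarrow> nat \<Rightarrow> 'a).
           can_approx \<Delta> (D n) m n M \<and>
           real m \<le> real (2 * D n + 1) * log (real CARD('a)) (real n / real (2 * D n + 1))
                     + C * real (D n)"
proof -
  have e1: "\<forall>\<^sub>F n in sequentially. norm (real (D n)) \<le> (1/4) * norm (real n)"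
    by (rule landau_o.smallD[OF assms(3)]) simp
  have e2: "\<forall>\<^sub>F n in sequentially. (4::nat) \<le> n" by (rule eventually_ge_at_top)
  show ?thesis
  proof (intro exI)
    show "\<forall>\<^sub>F n in sequentially. \<exists>m (M :: nat \<Rightarrow> nat \<Rightarrow> 'a).
           can_approx \<Delta> (D n) m n M \<and>
           real m \<le> real (2 * D n + 1) * log (real CARD('a)) (real n / real (2 * D n + 1))
                     + (3 + 2 * log (real CARD('a)) (exp 1 * real CARD('a))) * real (D n)"
      using e1 e2
    proof eventually_elim
      case (elim n)
      then have "4 * D n \<le> n" by simp
      then show ?case using step[OF assms(1) _ elim(2)] by blast
    qed
  qed
qed

end
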